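(* Let $H=\operatorname{diag}(\lambda_1,\dots,\lambda_n)$ with $\lambda_1\ge\dots\ge\lambda_{n-p}\ge0>\lambda_{n-p+1}\ge\dots\ge\lambda_n$ for some $1\le p<n$, let $f(x)=\frac12x^THx$, and let $L=\max(\lambda_1,-\lambda_n)$. Let $0<\alpha<1/L$, let $\gamma_k\in[0,1]$ and $\beta_k\in[0,1]$ for $k\ge1$, and generate iterates by choosing $x^1\in\mathbb{R}^n$, setting $x^0=x^1$, and for $k=1,2,\dots$ \[ y^k=x^k+\gamma_k(x^k-x^{k-1}),\qquad x^{k+1}=x^k+\beta_k(x^k-x^{k-1})-\alpha\nabla f(y^k). \] Then for every $i$ with $\lambda_i<0$ and every $k\ge0$, \[ x_i^{k+1}=x_i^0\prod_{m=0}^k(1+b_{i,m}), \] where $b_{i,0}=0$ and, for $k\ge1$, \[ b_{i,k}=(\beta_k+\gamma_k\alpha|\lambda_i|)\Big(1-\frac{1}{1+b_{i,k-1}}\Big)+\alpha|\lambda_i|. \] In addition, if $\gamma_{k+1}\ge\gamma_k$ and $\beta_{k+1}\ge\beta_k$ for all $k$, then $b_{i,k+1}\ge b_{i,k}$ for $k=1,2,\dots$.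
   Context: Here $x_i^k$ denotes the $i$-th component of $x^k$. The iteration is a general accelerated gradient framework: $\gamma_k=\beta_k=0$ gives gradient descent, $\gamma_k=0$ gives heavy-ball, $\gamma_k=\beta_k$ gives Nesterov-type accelerated gradient. *)

theory Defs
  imports Complex_Main
begin

text \<open>Vectors in R^n are functions nat => real, components indexed by 1..n.
  H = diag(lam 1, ..., lam n).\<close>

definition diagH :: "(nat \<Rightarrow> real) \<Rightarrow> nat \<Rightarrow> nat \<Rightarrow> real" where
  "diagH lam i j = (if i = j then lam i else 0)"

definition quad_f :: "nat \<Rightarrow> (nat \<Rightarrow> real) \<Rightarrow> (nat \<Rightarrow> real) \<Rightarrow> real" where
  "quad_f n lam x = (1/2) * (\<Sum>i=1..n. \<Sum>j=1..n. x i * diagH lam i j * x j)"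

text \<open>gradient of f (H symmetric): (grad f(x))_i = (H x)_i\<close>
definition quad_grad :: "nat \<Rightarrow> (nat \<Rightarrow> real) \<Rightarrow> (nat \<Rightarrow> real) \<Rightarrow> nat \<Rightarrow> real" where
  "quad_grad n lam x i = (\<Sum>j=1..n. diagH lam i j * x j)"

fun bseq :: "real \<Rightarrow> (nat \<Rightarrow> real) \<Rightarrow> (nat \<Rightarrow> real) \<Rightarrow> real \<Rightarrow> nat \<Rightarrow> real" where
  "bseq \<alpha> \<beta> \<gamma> l 0 = 0"
| "bseq \<alpha> \<beta> \<gamma> l (Suc k) =
     (\<beta> (Suc k) + \<gamma> (Suc k) * \<alpha> * \<bar>l\<bar>) * (1 - 1 / (1 + bseq \<alpha> \<beta> \<gamma> l k)) + \<alpha> * \<bar>l\<bar>"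

end

theory Submission
  imports Defs
begin


lemma bseq_nonneg:
  assumes "0 < \<alpha>" and "\<And>k. 1 \<le> k \<Longrightarrow> 0 \<le> \<gamma> k \<and> \<gamma> k \<le> 1"
    and "\<And>k. 1 \<le> k \<Longrightarrow> 0 \<le> \<beta> k \<and> \<beta> k \<le> 1"
  shows "0 \<le> bseq \<alpha> \<beta> \<gamma> l k"
proof (induction k)
  case 0 then show ?case by simp
next
  case (Suc k)
  have c: "0 \<le> \<beta> (Suc k) + \<gamma> (Suc k) * \<alpha> * \<bar>l\<bar>"
    using assms(2)[of "Suc k"] assms(3)[of "Suc k"] assms(1) by simp
  have g: "0 \<le> 1 - 1 / (1 + bseq \<alpha> \<beta> \<gamma> l k)"
    using Suc by (simp add: field_simps)
  show ?case using mult_nonneg_nonneg[OF c g] assms(1) by simp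
qed

lemma g_mono: "0 \<le> (a::real) \<Longrightarrow> a \<le> b \<Longrightarrow> 1 - 1/(1+a) \<le> 1 - 1/(1+b)"
  by (simp add: frac_le)

lemma bseq_mono:
  assumes "0 < \<alpha>" and g01: "\<And>k. 1 \<le> k \<Longrightarrow> 0 \<le> \<gamma> k \<and> \<gamma> k \<le> 1"
    and b01: "\<And>k. 1 \<le> k \<Longrightarrow> 0 \<le> \<beta> k \<and> \<beta> k \<le> 1"
    and mono: "\<forall>k\<ge>1. \<gamma> (k + 1) \<ge> \<gamma> k \<and> \<beta> (k + 1) \<ge> \<beta> k"
  shows "bseq \<alpha> \<beta> \<gamma> l (Suc (Suc k)) \<ge> bseq \<alpha> \<beta> \<gamma> l (Suc k)"
proof (induction k)
  case 0
  have c: "0 \<le> \<beta> 2 + \<gamma> 2 * \<alpha> * \<bar>l\<bar>"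
    using g01[of 2] b01[of 2] assms(1) by simp
  have a0: "0 \<le> \<alpha> * \<bar>l\<bar>" using assms(1) by simp
  have g: "0 \<le> 1 - 1 / (1 + \<alpha> * \<bar>l\<bar>)"
    using a0 by (simp add: field_simps)
  show ?case using mult_nonneg_nonneg[OF c g] by (simp add: numeral_2_eq_2)
next
  case (Suc k)
  let ?b = "bseq \<alpha> \<beta> \<gamma> l"
  have nn: "0 \<le> ?b (Suc k)" using bseq_nonneg[OF assms(1) g01 b01] .
  have g1: "0 \<le> 1 - 1 / (1 + ?b (Suc k))" using nn by (simp add: field_simps)
  have g2: "1 - 1 / (1 + ?b (Suc k)) \<le> 1 - 1 / (1 + ?b (Suc (Suc k)))"
    using g_mono[OF nn Suc.IH] .
  have c1: "0 \<le> \<beta> (Suc (Suc k)) + \<gamma> (Suc (Suc k)) * \<alpha> * \<bar>l\<bar>"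
    using g01[of "Suc (Suc k)"] b01[of "Suc (Suc k)"] assms(1) by simp
  have m: "\<gamma> (Suc (Suc k)) \<le> \<gamma> (Suc (Suc (Suc k)))" "\<beta> (Suc (Suc k)) \<le> \<beta> (Suc (Suc (Suc k)))"
    using mono[rule_format, of "Suc (Suc k)"] by auto
  have c2: "\<beta> (Suc (Suc k)) + \<gamma> (Suc (Suc k)) * \<alpha> * \<bar>l\<bar> \<le> \<beta> (Suc (Suc (Suc k))) + \<gamma> (Suc (Suc (Suc k))) * \<alpha> * \<bar>l\<bar>"
    using m assms(1) by (simp add: add_mono mult_right_mono)
  have "(\<beta> (Suc (Suc k)) + \<gamma> (Suc (Suc k)) * \<alpha> * \<bar>l\<bar>) * (1 - 1 / (1 + ?b (Suc k)))
     \<le> (\<beta> (Suc (Suc (Suc k))) + \<gamma> (Suc (Suc (Suc k))) * \<alpha> * \<bar>l\<bar>) * (1 - 1 / (1 + ?b (Suc (Suc k))))"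
    using mult_mono[OF c2 g2 _ g1] c1 c2 by linarith
  then show ?case by simp
qed

lemma grad_diag: "i \<in> {1..n} \<Longrightarrow> quad_grad n lam v i = lam i * v i"
proof -
  assume i: "i \<in> {1..n}"
  have "quad_grad n lam v i = (\<Sum>j\<in>{1..n}. if i = j then lam i * v i else 0)"
    unfolding quad_grad_def diagH_def by (rule sum.cong) auto
  also have "\<dots> = lam i * v i" using i by (simp add: sum.delta)
  finally show ?thesis .
qed

theorem theorem4p1:
  fixes n p :: nat and lam :: "nat \<Rightarrow> real" and \<alpha> L :: real
    and \<beta> \<gamma> :: "nat \<Rightarrow> real" and x y :: "nat \<Rightarrow> nat \<Rightarrow> real"
  assumes hp: "1 \<le> p" "p < n"
    and sorted: "\<And>i j. 1 \<le> i \<Longrightarrow> i \<le> j \<Longrightarrow> j \<le> n \<Longrightarrow> lam j \<le> lam i"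
    and nonneg: "lam (n - p) \<ge> 0"
    and neg: "lam (n - p + 1) < 0"
    and L_def: "L = max (lam 1) (- lam n)"
    and \<alpha>pos: "0 < \<alpha>" and \<alpha>L: "\<alpha> < 1 / L"
    and \<gamma>01: "\<And>k. 1 \<le> k \<Longrightarrow> 0 \<le> \<gamma> k \<and> \<gamma> k \<le> 1"
    and \<beta>01: "\<And>k. 1 \<le> k \<Longrightarrow> 0 \<le> \<beta> k \<and> \<beta> k \<le> 1"
    and x0: "x 0 = x 1"
    and yk: "\<And>k i. 1 \<le> k \<Longrightarrow> y k i = x k i + \<gamma> k * (x k i - x (k - 1) i)"
    and xk: "\<And>k i. 1 \<le> k \<Longrightarrow>
              x (k + 1) i = x k i + \<beta> k * (x k i - x (k - 1) i) - \<alpha> * quad_grad n lam (y k) i"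
  shows "(\<forall>i\<in>{1..n}. lam i < 0 \<longrightarrow>
            (\<forall>k. x (k + 1) i = x 0 i * (\<Prod>m=0..k. 1 + bseq \<alpha> \<beta> \<gamma> (lam i) m)))
       \<and> ((\<forall>k\<ge>1. \<gamma> (k + 1) \<ge> \<gamma> k \<and> \<beta> (k + 1) \<ge> \<beta> k) \<longrightarrow>
           (\<forall>i\<in>{1..n}. lam i < 0 \<longrightarrow>
              (\<forall>k\<ge>1. bseq \<alpha> \<beta> \<gamma> (lam i) (k + 1) \<ge> bseq \<alpha> \<beta> \<gamma> (lam i) k)))"
  proof (intro conjI impI ballI allI)
  fix i k assume i: "i \<in> {1..n}" and li: "lam i < 0"
  let ?b = "bseq \<alpha> \<beta> \<gamma> (lam i)"
  let ?a = "\<alpha> * \<bar>lam i\<bar>"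
  have bnn: "\<And>m. 0 \<le> ?b m" using bseq_nonneg[OF \<alpha>pos \<gamma>01 \<beta>01] .
  have step: "x (Suc m) i = x m i * (1 + ?b m)" for m
  proof (induction m)
    case 0 then show ?case using x0 by simp
  next
    case (Suc m)
    have pos: "0 < 1 + ?b m" using bnn[of m] by simp
    have prev: "x m i = x (Suc m) i / (1 + ?b m)" using Suc pos by (simp add: field_simps)
    have gr: "quad_grad n lam (y (Suc m)) i = lam i * y (Suc m) i" using grad_diag[OF i] .
    have "x (Suc (Suc m)) i = x (Suc m) i + \<beta> (Suc m) * (x (Suc m) i - x m i)
        - \<alpha> * (lam i * (x (Suc m) i + \<gamma> (Suc m) * (x (Suc m) i - x m i)))"
      using xk[of "Suc m" i] yk[of "Suc m" i] gr by simp
    also have "\<dots> = x (Suc m) i + \<beta> (Suc m) * (x (Suc m) i * (1 - 1 / (1 + ?b m)))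
        - \<alpha> * (lam i * (x (Suc m) i + \<gamma> (Suc m) * (x (Suc m) i * (1 - 1 / (1 + ?b m)))))"
      unfolding prev by (simp add: algebra_simps)
    also have "\<dots> = x (Suc m) i * (1 + ?b (Suc m))"
    proof -
      have "\<bar>lam i\<bar> = - lam i" using li by simp
      then show ?thesis
        by (simp only: bseq.simps) (simp add: algebra_simps)
    qed
    finally show ?case .
  qed
  show "x (k + 1) i = x 0 i * (\<Prod>m=0..k. 1 + ?b m)"
  proof (induction k)
    case 0 then show ?case using step[of 0] by simp
  next
    case (Suc k)
    then show ?case using step[of "Suc k"] by (simp add: prod.atLeast0_atMost_Suc del: bseq.simps)
  qed
next
  fix i k assume mono: "\<forall>k\<ge>1. \<gamma> (k + 1) \<ge> \<gamma> k \<and> \<beta> (k + 1) \<ge> \<beta> k"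
    and k: "(k::nat) \<ge> 1"
  then obtain j where "k = Suc j" by (cases k) auto
  then show "bseq \<alpha> \<beta> \<gamma> (lam i) (k + 1) \<ge> bseq \<alpha> \<beta> \<gamma> (lam i) k"
    using bseq_mono[OF \<alpha>pos \<gamma>01 \<beta>01 mono] by simp
qed

end
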